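(* Let $G$ be a finite simple graph, let $I$ be a maximum critical independent set in $G$, and let $X=I\cup N(I)$. Then $\operatorname{diadem}(G)\subseteq \operatorname{diadem}(G[X])$ and $\operatorname{nucleus}(G[X])\subseteq \operatorname{nucleus}(G)$.
   Context: For a graph $H$ and $Y\subseteq V(H)$, $N_H(Y)$ is the set of vertices of $H$ adjacent to some vertex of $Y$, and $d_H(Y)=|Y|-|N_H(Y)|$. An independent set $S$ of $H$ is critical in $H$ if $d_H(S)=\max\{d_H(Y):Y\subseteq V(H)\}$; the empty set may be critical. A maximum critical independent set of $H$ is a critical independent set of $H$ of maximum cardinality. $\operatorname{nucleus}(H)$ and $\operatorname{diadem}(H)$ are, respectively, the intersection and the union of all maximum critical independent sets of $H$. $N(I)=N_G(I)$, and $G[X]$ is the subgraph of $G$ induced by $X$. *)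

theory Defs
  imports Main
begin

definition simple_graph :: "'a set \<Rightarrow> ('a \<Rightarrow> 'a \<Rightarrow> bool) \<Rightarrow> bool" where
  "simple_graph V E \<longleftrightarrow> finite V \<and> (\<forall>u v. E u v \<longrightarrow> u \<in> V \<and> v \<in> V)
     \<and> (\<forall>u v. E u v \<longrightarrow> E v u) \<and> (\<forall>v. \<not> E v v)"

definition induced_edges :: "('a \<Rightarrow> 'a \<Rightarrow> bool) \<Rightarrow> 'a set \<Rightarrow> ('a \<Rightarrow> 'a \<Rightarrow> bool)" where
  "induced_edges E X = (\<lambda>u v. u \<in> X \<and> v \<in> X \<and> E u v)"

definition nbhd :: "'a set \<Rightarrow> ('a \<Rightarrow> 'a \<Rightarrow> bool) \<Rightarrow> 'a set \<Rightarrow> 'a set" where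
  "nbhd V E Y = {v \<in> V. \<exists>y\<in>Y. E y v}"

definition diff :: "'a set \<Rightarrow> ('a \<Rightarrow> 'a \<Rightarrow> bool) \<Rightarrow> 'a set \<Rightarrow> int" where
  "diff V E Y = int (card Y) - int (card (nbhd V E Y))"

definition independent :: "'a set \<Rightarrow> ('a \<Rightarrow> 'a \<Rightarrow> bool) \<Rightarrow> 'a set \<Rightarrow> bool" where
  "independent V E S \<longleftrightarrow> S \<subseteq> V \<and> (\<forall>u\<in>S. \<forall>v\<in>S. \<not> E u v)"

definition critical_independent :: "'a set \<Rightarrow> ('a \<Rightarrow> 'a \<Rightarrow> bool) \<Rightarrow> 'a set \<Rightarrow> bool" where
  "critical_independent V E S \<longleftrightarrow> independent V E S \<and>
     diff V E S = Max (diff V E ` Pow V)"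

definition max_critical_independent :: "'a set \<Rightarrow> ('a \<Rightarrow> 'a \<Rightarrow> bool) \<Rightarrow> 'a set \<Rightarrow> bool" where
  "max_critical_independent V E S \<longleftrightarrow> critical_independent V E S \<and>
     (\<forall>T. critical_independent V E T \<longrightarrow> card T \<le> card S)"

definition nucleus :: "'a set \<Rightarrow> ('a \<Rightarrow> 'a \<Rightarrow> bool) \<Rightarrow> 'a set" where
  "nucleus V E = \<Inter> {S. max_critical_independent V E S}"

definition diadem :: "'a set \<Rightarrow> ('a \<Rightarrow> 'a \<Rightarrow> bool) \<Rightarrow> 'a set" where
  "diadem V E = \<Union> {S. max_critical_independent V E S}"

end

theory Submission
  imports Defs
begin

lemma sg_fin: "simple_graph V E \<Longrightarrow> finite V"
  by (simp add: simple_graph_def)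

lemma nbhd_sub: "nbhd V E Y \<subseteq> V" by (auto simp: nbhd_def)

lemma diff_le_Max:
  assumes "simple_graph V E" "Y \<subseteq> V"
  shows "diff V E Y \<le> Max (diff V E ` Pow V)"
  using assms by (intro Max_ge) (auto simp: sg_fin)

lemma card_split: "finite A \<Longrightarrow> card (A - B) + card (A \<inter> B) = card A"
proof -
  assume f: "finite A"
  have "card ((A - B) \<union> (A \<inter> B)) = card (A - B) + card (A \<inter> B)"
    using f by (intro card_Un_disjoint) auto
  moreover have "(A - B) \<union> (A \<inter> B) = A" by blast
  ultimately show ?thesis by simp
qed

lemma hall_like:
  assumes g: "simple_graph V E" and c: "critical_independent V E I"
    and S: "S \<subseteq> nbhd V E I"
  shows "card S \<le> card (nbhd V E S \<inter> I)"
proof -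
  have fV: "finite V" using g by (rule sg_fin)
  have IV: "I \<subseteq> V" using c by (simp add: critical_independent_def independent_def)
  define W where "W = I - nbhd V E S"
  have WV: "W \<subseteq> V" using IV by (auto simp: W_def)
  have sub: "nbhd V E W \<subseteq> nbhd V E I - S"
  proof
    fix v assume v: "v \<in> nbhd V E W"
    then obtain w where w: "w \<in> W" "E w v" "v \<in> V" by (auto simp: nbhd_def)
    have "v \<notin> S"
    proof
      assume "v \<in> S"
      moreover have "E v w" using w g by (simp add: simple_graph_def)
      moreover have "w \<in> V" using w WV by auto
      ultimately have "w \<in> nbhd V E S" by (auto simp: nbhd_def)
      thus False using w by (simp add: W_def)
    qed
    moreover have "v \<in> nbhd V E I" using w by (auto simp: nbhd_def W_def)
    ultimately show "v \<in> nbhd V E I - S" by simp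
  qed
  have fI: "finite I" using finite_subset[OF IV fV] .
  have fNI: "finite (nbhd V E I)" using finite_subset[OF nbhd_sub fV] .
  have c1: "card (nbhd V E W) \<le> card (nbhd V E I - S)"
    using sub fNI by (intro card_mono) auto
  have c2: "card (nbhd V E I - S) + card S = card (nbhd V E I)"
    using card_split[OF fNI, of S] S by (simp add: Int_absorb1)
  have c4: "card W + card (nbhd V E S \<inter> I) = card I"
    unfolding W_def using card_split[OF fI, of "nbhd V E S"] by (simp add: Int_commute)
  have "diff V E W \<le> diff V E I"
    using diff_le_Max[OF g WV] c by (simp add: critical_independent_def)
  hence "int (card W) - int (card (nbhd V E W)) \<le> int (card I) - int (card (nbhd V E I))"
    by (simp add: diff_def)
  moreover have "int (card (nbhd V E W)) \<le> int (card (nbhd V E I - S))" using c1 by simp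
  moreover have "int (card (nbhd V E I - S)) + int (card S) = int (card (nbhd V E I))" using c2 by (metis of_nat_add)
  moreover have "int (card W) + int (card (nbhd V E S \<inter> I)) = int (card I)" using c4 by (metis of_nat_add)
  ultimately show ?thesis by linarith
qed

lemma nbhd_Un: "nbhd V E (Y \<union> Z) = nbhd V E Y \<union> nbhd V E Z"
  by (auto simp: nbhd_def)

lemma nbhd_mono: "Y \<subseteq> Z \<Longrightarrow> nbhd V E Y \<subseteq> nbhd V E Z"
  by (auto simp: nbhd_def)

lemma supermod:
  assumes g: "simple_graph V E" and "Y \<subseteq> V" "Z \<subseteq> V"
  shows "diff V E (Y \<union> Z) + diff V E (Y \<inter> Z) \<ge> diff V E Y + diff V E Z"
proof -
  have fV: "finite V" using g by (rule sg_fin)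
  have fY: "finite Y" "finite Z" using finite_subset[OF assms(2) fV] finite_subset[OF assms(3) fV] by auto
  have fN: "finite (nbhd V E Y)" "finite (nbhd V E Z)" using finite_subset[OF nbhd_sub fV] by auto
  have a: "card (Y \<union> Z) + card (Y \<inter> Z) = card Y + card Z" using card_Un_Int[OF fY] by simp
  have b: "card (nbhd V E Y \<union> nbhd V E Z) + card (nbhd V E Y \<inter> nbhd V E Z)
     = card (nbhd V E Y) + card (nbhd V E Z)" using card_Un_Int[OF fN] by simp
  have "nbhd V E (Y \<inter> Z) \<subseteq> nbhd V E Y \<inter> nbhd V E Z" by (auto simp: nbhd_def)
  hence c: "card (nbhd V E (Y \<inter> Z)) \<le> card (nbhd V E Y \<inter> nbhd V E Z)"
    using fN by (intro card_mono) auto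
  have a': "int (card (Y \<union> Z)) + int (card (Y \<inter> Z)) = int (card Y) + int (card Z)"
    using a by (metis of_nat_add)
  have b': "int (card (nbhd V E Y \<union> nbhd V E Z)) + int (card (nbhd V E Y \<inter> nbhd V E Z))
     = int (card (nbhd V E Y)) + int (card (nbhd V E Z))" using b by (metis of_nat_add)
  have c': "int (card (nbhd V E (Y \<inter> Z))) \<le> int (card (nbhd V E Y \<inter> nbhd V E Z))" using c by simp
  show ?thesis unfolding diff_def nbhd_Un using a' b' c' by linarith
qed

lemma nbhd_induced:
  assumes "X \<subseteq> V" "Y \<subseteq> X"
  shows "nbhd X (induced_edges E X) Y = nbhd V E Y \<inter> X"
  using assms by (auto simp: nbhd_def induced_edges_def)

lemma indep_nbhd_disj:
  assumes g: "simple_graph V E" and "independent V E I"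
  shows "I \<inter> nbhd V E I = {}"
  using assms by (auto simp: nbhd_def independent_def)

lemma split_bound:
  assumes g: "simple_graph V E" and c: "critical_independent V E I"
    and X: "X = I \<union> nbhd V E I" and Y: "Y \<subseteq> X"
  shows "diff X (induced_edges E X) Y \<le>
     diff V E (Y \<inter> I) + int (card (Y \<inter> nbhd V E I)) - int (card (nbhd V E (Y \<inter> nbhd V E I) \<inter> I))"
proof -
  have fV: "finite V" using g by (rule sg_fin)
  have IV: "I \<subseteq> V" using c by (simp add: critical_independent_def independent_def)
  have XV: "X \<subseteq> V" unfolding X using IV nbhd_sub[of V E I] by (rule Un_least)
  have fX: "finite X" using finite_subset[OF XV fV] .
  have disj: "I \<inter> nbhd V E I = {}"
    using indep_nbhd_disj[OF g] c by (simp add: critical_independent_def)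
  define Y1 where "Y1 = Y \<inter> I"
  define Y2 where "Y2 = Y \<inter> nbhd V E I"
  define A where "A = nbhd V E Y2 \<inter> I"
  have Yeq: "Y = Y1 \<union> Y2" using Y X by (auto simp: Y1_def Y2_def)
  have fY: "finite Y1" "finite Y2" using finite_subset[OF Y fX] unfolding Y1_def Y2_def by auto
  have cY: "card Y = card Y1 + card Y2"
    unfolding Yeq using fY disj by (intro card_Un_disjoint) (auto simp: Y1_def Y2_def)
  have N1: "nbhd V E Y1 \<subseteq> nbhd V E I" unfolding Y1_def by (rule nbhd_mono) auto
  have sub: "nbhd V E Y1 \<union> A \<subseteq> nbhd X (induced_edges E X) Y"
  proof -
    have "nbhd V E Y1 \<subseteq> nbhd V E Y" "nbhd V E Y2 \<subseteq> nbhd V E Y"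
      using nbhd_mono[of Y1 Y V E] nbhd_mono[of Y2 Y V E] Yeq by auto
    moreover have "nbhd V E Y1 \<subseteq> X" using N1 X by auto
    ultimately show ?thesis unfolding nbhd_induced[OF XV Y] A_def using X by auto
  qed
  have fN: "finite (nbhd X (induced_edges E X) Y)" using finite_subset[OF nbhd_sub fX] .
  have fN1: "finite (nbhd V E Y1)" using finite_subset[OF nbhd_sub fV] .
  have fA: "finite A" using finite_subset[OF nbhd_sub fV] unfolding A_def by auto
  have dA: "nbhd V E Y1 \<inter> A = {}" using N1 disj by (auto simp: A_def)
  have "card (nbhd V E Y1) + card A = card (nbhd V E Y1 \<union> A)"
    using fN1 fA dA by (simp add: card_Un_disjoint)
  also have "\<dots> \<le> card (nbhd X (induced_edges E X) Y)" using sub fN by (rule card_mono[rotated])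
  finally have "card (nbhd V E Y1) + card A \<le> card (nbhd X (induced_edges E X) Y)" .
  hence "int (card (nbhd V E Y1)) + int (card A) \<le> int (card (nbhd X (induced_edges E X) Y))" by linarith
  moreover have "int (card Y) = int (card Y1) + int (card Y2)" using cY by simp
  ultimately show ?thesis unfolding diff_def Y1_def[symmetric] Y2_def[symmetric] A_def[symmetric] by linarith
qed

theorem lemma2p2:
  fixes V :: "'a set" and E :: "'a \<Rightarrow> 'a \<Rightarrow> bool" and I :: "'a set"
  assumes "simple_graph V E"
    and "max_critical_independent V E I"
  defines "X \<equiv> I \<union> nbhd V E I"
  shows "diadem V E \<subseteq> diadem X (induced_edges E X)
       \<and> nucleus X (induced_edges E X) \<subseteq> nucleus V E"
proof -
  note g = assms(1)
  have Xeq: "X = I \<union> nbhd V E I" by (simp add: X_def)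
  define E' where "E' = induced_edges E X"
  define d where "d = Max (diff V E ` Pow V)"
  have fV: "finite V" using g by (rule sg_fin)
  have c: "critical_independent V E I" using assms(2) by (simp add: max_critical_independent_def)
  have IV: "I \<subseteq> V" using c by (simp add: critical_independent_def independent_def)
  have XV: "X \<subseteq> V" unfolding X_def using IV nbhd_sub[of V E I] by (rule Un_least)
  have fX: "finite X" using finite_subset[OF XV fV] .
  have fI: "finite I" using finite_subset[OF IV fV] .
  have dI: "diff V E I = d" using c by (simp add: critical_independent_def d_def)
  have disj: "I \<inter> nbhd V E I = {}"
    using indep_nbhd_disj[OF g] c by (simp add: critical_independent_def)
  have dle: "diff V E Y \<le> d" if "Y \<subseteq> V" for Y using diff_le_Max[OF g that] by (simp add: d_def)
  have A: "diff X E' Y \<le> d" if Y: "Y \<subseteq> X" for Y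
  proof -
    have "card (Y \<inter> nbhd V E I) \<le> card (nbhd V E (Y \<inter> nbhd V E I) \<inter> I)"
      by (rule hall_like[OF g c]) auto
    moreover have "diff V E (Y \<inter> I) \<le> d" using IV by (intro dle) auto
    ultimately show ?thesis using split_bound[OF g c Xeq Y] unfolding E'_def by linarith
  qed
  have B: "diff X E' I = d"
  proof -
    have "nbhd X E' I = nbhd V E I" unfolding E'_def using nbhd_induced[OF XV] X_def by auto
    thus ?thesis using dI by (simp add: diff_def)
  qed
  have MX: "Max (diff X E' ` Pow X) = d"
  proof (rule Max_eqI)
    show "finite (diff X E' ` Pow X)" using fX by simp
    show "y \<le> d" if "y \<in> diff X E' ` Pow X" for y using that A by auto
    show "d \<in> diff X E' ` Pow X" using B X_def by auto
  qed
  have C: "card T \<le> card I" if T: "critical_independent X E' T" for T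
  proof -
    have TX: "T \<subseteq> X" and Tind: "\<forall>u\<in>T. \<forall>v\<in>T. \<not> E' u v" and dT: "diff X E' T = d"
      using T MX by (auto simp: critical_independent_def independent_def)
    define T1 where "T1 = T \<inter> I"
    define T2 where "T2 = T \<inter> nbhd V E I"
    define A where "A = nbhd V E T2 \<inter> I"
    have h: "card T2 \<le> card A" unfolding A_def T2_def by (rule hall_like[OF g c]) auto
    have "diff V E T1 \<le> d" using IV by (intro dle) (auto simp: T1_def)
    hence "card A \<le> card T2" using split_bound[OF g c Xeq TX] dT
      unfolding E'_def T1_def[symmetric] T2_def[symmetric] A_def[symmetric] by linarith
    hence eq: "card T2 = card A" using h by simp
    have Teq: "T = T1 \<union> T2" using TX X_def by (auto simp: T1_def T2_def)
    have fT: "finite T1" "finite T2" using finite_subset[OF TX fX] unfolding T1_def T2_def by auto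
    have fA: "finite A" unfolding A_def using fI by simp
    have cT: "card T = card T1 + card T2"
      unfolding Teq using fT disj by (intro card_Un_disjoint) (auto simp: T1_def T2_def)
    have dTA: "T1 \<inter> A = {}"
    proof (rule ccontr)
      assume "T1 \<inter> A \<noteq> {}"
      then obtain a t where a: "a \<in> T1" "t \<in> T2" "E t a" by (auto simp: A_def nbhd_def)
      have "a \<in> T" "t \<in> T" "a \<in> X" "t \<in> X" using a TX by (auto simp: T1_def T2_def)
      hence "E' t a" using a by (simp add: E'_def induced_edges_def)
      thus False using Tind \<open>a \<in> T\<close> \<open>t \<in> T\<close> by blast
    qed
    have "card T = card (T1 \<union> A)" using cT eq fT fA dTA by (simp add: card_Un_disjoint)
    also have "\<dots> \<le> card I" using fI by (intro card_mono) (auto simp: T1_def A_def)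
    finally show ?thesis .
  qed
  have D: "max_critical_independent X E' J" if J: "max_critical_independent V E J" for J
  proof -
    have cJ: "critical_independent V E J" using J by (simp add: max_critical_independent_def)
    have JV: "J \<subseteq> V" and Jind: "\<forall>u\<in>J. \<forall>v\<in>J. \<not> E u v" and dJ: "diff V E J = d"
      using cJ by (auto simp: critical_independent_def independent_def d_def)
    have cardJ: "card J = card I"
      using J assms(2) c cJ by (simp add: max_critical_independent_def le_antisym)
    have fJ: "finite J" using finite_subset[OF JV fV] .
    define B where "B = J - X"
    define Cs where "Cs = J \<inter> nbhd V E I"
    have dU: "diff V E (I \<union> J) \<ge> d"
    proof -
      have "diff V E (I \<union> J) + diff V E (I \<inter> J) \<ge> diff V E I + diff V E J"
        by (rule supermod[OF g IV JV])
      moreover have "diff V E (I \<inter> J) \<le> d" using IV by (intro dle) auto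
      ultimately show ?thesis using dI dJ by linarith
    qed
    have UJ: "I \<union> J = (I \<union> B) \<union> Cs" using X_def by (auto simp: B_def Cs_def)
    have fB: "finite B" "finite Cs" using fJ by (auto simp: B_def Cs_def)
    have dIB: "(I \<union> B) \<inter> Cs = {}" using disj X_def by (auto simp: B_def Cs_def)
    have cU: "card (I \<union> J) = card (I \<union> B) + card Cs"
      unfolding UJ using fI fB dIB by (simp add: card_Un_disjoint)
    have NU: "nbhd V E (I \<union> J) = nbhd V E (I \<union> B) \<union> nbhd V E Cs"
      by (simp only: UJ nbhd_Un)
    have hC: "card Cs \<le> card (nbhd V E Cs \<inter> I)"
      unfolding Cs_def by (rule hall_like[OF g c]) auto
    have sI: "nbhd V E Cs \<inter> I \<subseteq> nbhd V E (I \<union> J) - nbhd V E (I \<union> B)"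
    proof
      fix v assume v: "v \<in> nbhd V E Cs \<inter> I"
      hence "v \<in> nbhd V E (I \<union> J)" using NU by auto
      moreover have "v \<notin> nbhd V E I" using v disj by auto
      moreover have "v \<notin> nbhd V E B"
      proof
        assume "v \<in> nbhd V E B"
        then obtain b where b: "b \<in> B" "E b v" by (auto simp: nbhd_def)
        hence "E v b" using g by (simp add: simple_graph_def)
        hence "b \<in> nbhd V E I" using v b JV by (auto simp: nbhd_def B_def)
        thus False using b X_def by (simp add: B_def)
      qed
      ultimately show "v \<in> nbhd V E (I \<union> J) - nbhd V E (I \<union> B)" by (simp add: nbhd_Un)
    qed
    have fNU: "finite (nbhd V E (I \<union> J))" using finite_subset[OF nbhd_sub fV] .
    have sb: "nbhd V E (I \<union> B) \<subseteq> nbhd V E (I \<union> J)" by (rule nbhd_mono) (auto simp: B_def)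
    have cc: "card (nbhd V E (I \<union> J)) = card (nbhd V E (I \<union> B)) + card (nbhd V E (I \<union> J) - nbhd V E (I \<union> B))"
    proof -
      have "nbhd V E (I \<union> J) \<inter> nbhd V E (I \<union> B) = nbhd V E (I \<union> B)" using sb by blast
      thus ?thesis using card_split[OF fNU, of "nbhd V E (I \<union> B)"] by simp
    qed
    have "card (nbhd V E Cs \<inter> I) \<le> card (nbhd V E (I \<union> J) - nbhd V E (I \<union> B))"
      using sI fNU by (intro card_mono) auto
    hence dIB2: "diff V E (I \<union> B) \<ge> d" using dU cU cc hC unfolding diff_def by linarith
    have indIB: "independent V E (I \<union> B)"
      unfolding independent_def
    proof (intro conjI ballI)
      show "I \<union> B \<subseteq> V" using IV JV by (auto simp: B_def)
      fix u v assume u: "u \<in> I \<union> B" and v: "v \<in> I \<union> B"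
      show "\<not> E u v"
      proof
        assume e: "E u v"
        have e': "E v u" using e g by (simp add: simple_graph_def)
        have Iind: "\<forall>u\<in>I. \<forall>v\<in>I. \<not> E u v" using c by (simp add: critical_independent_def independent_def)
        show False
        proof (cases "u \<in> I")
          case True
          show False
          proof (cases "v \<in> I")
            case True thus False using Iind \<open>u \<in> I\<close> e by blast
          next
            case False
            hence "v \<in> B" using v by simp
            hence "v \<in> V" "v \<notin> nbhd V E I" using JV X_def by (auto simp: B_def)
            thus False using \<open>u \<in> I\<close> e by (auto simp: nbhd_def)
          qed
        next
          case False
          hence uB: "u \<in> B" using u by simp
          show False
          proof (cases "v \<in> I")
            case True
            have "u \<in> V" "u \<notin> nbhd V E I" using uB JV X_def by (auto simp: B_def)
            thus False using True e' by (auto simp: nbhd_def)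
          next
            case False
            hence "v \<in> J" "u \<in> J" using v uB by (auto simp: B_def)
            thus False using Jind e by blast
          qed
        qed
      qed
    qed
    have IBV: "I \<union> B \<subseteq> V" using indIB by (simp add: independent_def)
    have "diff V E (I \<union> B) = d" using dIB2 dle[OF IBV] by linarith
    hence cIB: "critical_independent V E (I \<union> B)" using indIB by (simp add: critical_independent_def d_def)
    hence "card (I \<union> B) \<le> card I" using assms(2) by (simp add: max_critical_independent_def)
    moreover have "card ((I \<union> B) - I) + card ((I \<union> B) \<inter> I) = card (I \<union> B)"
      using fI fB by (intro card_split) simp
    moreover have "(I \<union> B) \<inter> I = I" by blast
    ultimately have "card ((I \<union> B) - I) = 0" by simp
    moreover have "finite ((I \<union> B) - I)" using fI fB(1) by (intro finite_Diff finite_UnI)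
    ultimately have "(I \<union> B) - I = {}" by (simp only: card_0_eq)
    hence "B \<subseteq> I" by blast
    hence JX: "J \<subseteq> X" using X_def by (auto simp: B_def)
    have NJ: "nbhd X E' J = nbhd V E J \<inter> X" unfolding E'_def by (rule nbhd_induced[OF XV JX])
    have "card (nbhd X E' J) \<le> card (nbhd V E J)"
      unfolding NJ using finite_subset[OF nbhd_sub fV] by (intro card_mono) auto
    hence "diff X E' J \<ge> d" using dJ unfolding diff_def by linarith
    hence dJX: "diff X E' J = d" using A[OF JX] by linarith
    have indJX: "independent X E' J" using JX Jind by (auto simp: independent_def E'_def induced_edges_def)
    have cJX: "critical_independent X E' J" using indJX dJX MX by (simp add: critical_independent_def)
    show ?thesis using cJX C cardJ by (simp add: max_critical_independent_def)
  qed
  show ?thesis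
  proof
    show "diadem V E \<subseteq> diadem X (induced_edges E X)"
      using D unfolding diadem_def E'_def by blast
    show "nucleus X (induced_edges E X) \<subseteq> nucleus V E"
      using D unfolding nucleus_def E'_def by blast
  qed
qed

end
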